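(* Let $\psi'$ be a differentiable strongly convex function, let $G(\pi_i,\pi_i')=D_{\psi'}(\pi_i,\pi_i')$, and fix $\mu>0$. For any $\sigma\in\mathcal X$ and any Nash equilibrium $\pi^*\in\Pi^*$ of the original game, $$D_{\psi'}(\pi^*,\pi^{\mu,\sigma})-D_{\psi'}(\pi^*,\sigma)\le-D_{\psi'}(\pi^{\mu,\sigma},\sigma).$$ In particular, if $\sigma^{k+1}=\pi^{\mu,\sigma^k}$, then $D_{\psi'}(\pi^*,\sigma^{k+1})-D_{\psi'}(\pi^*,\sigma^k)\le-D_{\psi'}(\sigma^{k+1},\sigma^k)$ for all $k\ge0$.
   Context: Game. Let $N\ge1$. For each $i\in[N]$, $\mathcal X_i\subseteq\mathbb R^{d_i}$ is a nonempty compact convex set, and $\mathcal X=\prod_i\mathcal X_i$. Each $v_i:\mathcal X\to\mathbb R$ is differentiable, with block gradient $\nabla_{\pi_i}v_i$. The game is monotone: $\sum_i\langle\nabla_{\pi_i}v_i(\pi)-\nabla_{\pi_i}v_i(\pi'),\pi_i-\pi_i'\rangle\le0$ for all $\pi,\pi'$. A Nash equilibrium is a $\pi^*$ with $v_i(\pi^* )\ge v_i(\pi_i,\pi^*_{-i})$ for all $i$ and $\pi_i\in\mathcal X_i$. $\Pi^*$ is the set of Nash equilibria. Bregman divergence: $D_{\psi'}(x,y)=\psi'(x)-\psi'(y)-\langle\nabla\psi'(y),x-y\rangle$, and $D_{\psi'}(\pi,\pi')=\sum_iD_{\psi'}(\pi_i,\pi_i')$. Perturbed equilibrium. For $\mu>0$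 and $\sigma\in\mathcal X$, $\pi^{\mu,\sigma}$ is the profile with $\pi_i^{\mu,\sigma}\in\arg\max_{\pi_i\in\mathcal X_i}\{v_i(\pi_i,\pi^{\mu,\sigma}_{-i})-\mu G(\pi_i,\sigma_i)\}$ for all $i$. *)

theory Defs
  imports "HOL-Analysis.Analysis"
begin

text \<open>Players are indexed by a finite type 'n (so N = CARD('n) >= 1); every player's
strategy lives in a common Euclidean space 'a; a strategy profile is an element of 'a ^ 'n.\<close>

definition profile_set :: "('n::finite \<Rightarrow> 'a set) \<Rightarrow> ('a ^ 'n) set" where
  "profile_set Xs = {p. \<forall>i. p $ i \<in> Xs i}"

definition upd :: "'a ^ 'n::finite \<Rightarrow> 'n \<Rightarrow> 'a \<Rightarrow> 'a ^ 'n" where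
  "upd p i x = (\<chi> j. if j = i then x else p $ j)"

definition blk :: "'n::finite \<Rightarrow> 'a::zero \<Rightarrow> 'a ^ 'n" where
  "blk i h = (\<chi> j. if j = i then h else 0)"

definition strongly_convex :: "('a::real_inner \<Rightarrow> real) \<Rightarrow> bool" where
  "strongly_convex f \<longleftrightarrow> (\<exists>rho>0. \<forall>x y. \<forall>t::real. 0 \<le> t \<and> t \<le> 1 \<longrightarrow>
      f (t *\<^sub>R x + (1 - t) *\<^sub>R y) \<le> t * f x + (1 - t) * f y
        - rho / 2 * t * (1 - t) * (norm (x - y))\<^sup>2)"

definition bregman :: "('a::real_normed_vector \<Rightarrow> real) \<Rightarrow> 'a \<Rightarrow> 'a \<Rightarrow> real" where
  "bregman psi x y = psi x - psi y - frechet_derivative psi (at y) (x - y)"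

definition bregman_prof :: "('a::real_normed_vector \<Rightarrow> real) \<Rightarrow> 'a ^ 'n::finite \<Rightarrow> 'a ^ 'n \<Rightarrow> real" where
  "bregman_prof psi p q = (\<Sum>i\<in>UNIV. bregman psi (p $ i) (q $ i))"

definition is_block_gradient ::
  "('n::finite \<Rightarrow> 'a::real_inner ^ 'n \<Rightarrow> real) \<Rightarrow> ('n \<Rightarrow> 'a set) \<Rightarrow> ('n \<Rightarrow> 'a ^ 'n \<Rightarrow> 'a) \<Rightarrow> bool" where
  "is_block_gradient v Xs grad \<longleftrightarrow> (\<forall>i. \<forall>p\<in>profile_set Xs. \<exists>D.
      (v i has_derivative D) (at p within profile_set Xs) \<and> (\<forall>h. D (blk i h) = grad i p \<bullet> h))"

definition monotone_game ::
  "('n::finite \<Rightarrow> 'a::real_inner ^ 'n \<Rightarrow> 'a) \<Rightarrow> ('n \<Rightarrow> 'a set) \<Rightarrow> bool" where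
  "monotone_game grad Xs \<longleftrightarrow> (\<forall>p\<in>profile_set Xs. \<forall>q\<in>profile_set Xs.
      (\<Sum>i\<in>UNIV. (grad i p - grad i q) \<bullet> (p $ i - q $ i)) \<le> 0)"

definition nash_eq :: "('n::finite \<Rightarrow> 'a ^ 'n \<Rightarrow> real) \<Rightarrow> ('n \<Rightarrow> 'a set) \<Rightarrow> 'a ^ 'n \<Rightarrow> bool" where
  "nash_eq v Xs p \<longleftrightarrow> p \<in> profile_set Xs \<and> (\<forall>i. \<forall>x\<in>Xs i. v i (upd p i x) \<le> v i p)"

definition perturbed_eq ::
  "('n::finite \<Rightarrow> 'a::real_normed_vector ^ 'n \<Rightarrow> real) \<Rightarrow> ('n \<Rightarrow> 'a set) \<Rightarrow> ('a \<Rightarrow> real) \<Rightarrow> real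
    \<Rightarrow> 'a ^ 'n \<Rightarrow> 'a ^ 'n \<Rightarrow> bool" where
  "perturbed_eq v Xs psi mu sg p \<longleftrightarrow> p \<in> profile_set Xs \<and>
     (\<forall>i. \<forall>x\<in>Xs i. v i (upd p i x) - mu * bregman psi x (sg $ i)
                    \<le> v i p - mu * bregman psi (p $ i) (sg $ i))"

end

theory Submission
  imports Defs
begin

lemma fo_1d:
  fixes F :: "real \<Rightarrow> real"
  assumes der: "(F has_derivative (\<lambda>t. t * c)) (at 0 within {0..1})"
    and mx: "\<forall>t\<in>{0..1}. F t \<le> F 0"
  shows "c \<le> 0"
proof (rule ccontr)
  assume "\<not> c \<le> 0"
  hence c: "c > 0" by simp
  from der[unfolded has_derivative_within_alt] c obtain d where d: "d > 0"
    "\<forall>y\<in>{0..1}. norm (y - 0) < d \<longrightarrow> norm (F y - F 0 - (y - 0) * c) \<le> c/2 * norm (y - 0)"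
    by (meson half_gt_zero)
  define t where "t = min (d/2) 1"
  have t: "t > 0" "t \<le> 1" "t < d" using d by (auto simp: t_def)
  hence "\<bar>F t - F 0 - t * c\<bar> \<le> c/2 * t" using d(2) by auto
  hence "F t - F 0 \<ge> t * c / 2" using abs_ge_minus_self[of "F t - F 0 - t * c"] mult.commute[of "c/2" t] by (simp add: field_simps)
  moreover have "t * c / 2 > 0" using t c by simp
  moreover have "F t \<le> F 0" using mx t by auto
  ultimately show False by linarith
qed

lemma fo_convex:
  fixes f :: "'b::real_normed_vector \<Rightarrow> real"
  assumes der: "(f has_derivative D) (at x within S)"
    and S: "convex S" and x: "x \<in> S" and y: "y \<in> S"
    and mx: "\<forall>z\<in>S. f z \<le> f x"
  shows "D (y - x) \<le> 0"
proof -
  let ?g = "\<lambda>t::real. x + t *\<^sub>R (y - x)"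
  have g: "(?g has_derivative (\<lambda>t. t *\<^sub>R (y - x))) (at 0 within {0..1})"
    by (intro derivative_eq_intros) auto
  have img: "?g ` {0..1} \<subseteq> S"
  proof
    fix z assume "z \<in> ?g ` {0..1}"
    then obtain t where t: "t \<in> {0..1}" "z = ?g t" by auto
    have "z = (1 - t) *\<^sub>R x + t *\<^sub>R y" using t by (simp add: algebra_simps)
    moreover have "(1 - t) *\<^sub>R x + t *\<^sub>R y \<in> S"
      by (rule convexD[OF S x y]) (use t in auto)
    ultimately show "z \<in> S" by simp
  qed
  have der2: "(f has_derivative D) (at (?g 0) within (?g ` {0..1}))"
    using has_derivative_subset[OF der img] by simp
  have "((f \<circ> ?g) has_derivative (D \<circ> (\<lambda>t. t *\<^sub>R (y - x)))) (at 0 within {0..1})"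
    by (rule diff_chain_within[OF g der2])
  moreover have "D \<circ> (\<lambda>t. t *\<^sub>R (y - x)) = (\<lambda>t. t * D (y - x))"
    using has_derivative_bounded_linear[OF der]
    using linear_scale[OF bounded_linear.linear[OF has_derivative_bounded_linear[OF der]]]
    by (auto simp: fun_eq_iff)
  ultimately have "((f \<circ> ?g) has_derivative (\<lambda>t. t * D (y - x))) (at 0 within {0..1})" by simp
  moreover have "\<forall>t\<in>{0..1}. (f \<circ> ?g) t \<le> (f \<circ> ?g) 0" using mx img by auto
  ultimately show ?thesis by (rule fo_1d)
qed

lemma blk_linear: "bounded_linear (blk i :: 'a::real_normed_vector \<Rightarrow> 'a ^ 'n::finite)"
proof -
  have nrm: "norm (blk i x :: 'a ^ 'n) \<le> norm x * 1" for x :: 'a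
  proof -
    have "norm (blk i x :: 'a ^ 'n) = norm (blk i x $ i)"
    proof -
      have "norm (blk i x :: 'a ^ 'n) = sqrt (\<Sum>j\<in>UNIV. (norm (blk i x $ j))\<^sup>2)"
        by (simp add: norm_vec_def L2_set_def)
      also have "(\<Sum>j\<in>UNIV. (norm (blk i x $ j))\<^sup>2) = (norm (blk i x $ i))\<^sup>2"
        by (subst sum.remove[of _ i]) (auto simp: blk_def)
      finally show ?thesis by simp
    qed
    thus ?thesis by (simp add: blk_def)
  qed
  show ?thesis
  proof (rule bounded_linear_intro[where K=1])
    fix x y :: 'a show "blk i (x + y) = (blk i x + blk i y :: 'a ^ 'n)" by (simp add: blk_def vec_eq_iff)
  next
    fix r :: real and x :: 'a show "blk i (r *\<^sub>R x) = (r *\<^sub>R blk i x :: 'a ^ 'n)" by (simp add: blk_def vec_eq_iff)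
  next
    fix x :: 'a show "norm (blk i x :: 'a ^ 'n) \<le> norm x * 1" by (rule nrm)
  qed
qed

lemma upd_eq: fixes p :: "'a::real_normed_vector ^ 'n::finite" shows "upd p i x = (p - blk i (p $ i)) + blk i x"
  by (simp add: upd_def blk_def vec_eq_iff)

lemma block_fo:
  fixes Xs :: "'n::finite \<Rightarrow> 'a::euclidean_space set"
  assumes grad: "is_block_gradient v Xs grad"
    and q: "q \<in> profile_set Xs" and cv: "convex (Xs i)"
    and gd: "(g has_derivative G) (at (q $ i))"
    and mx: "\<forall>x\<in>Xs i. v i (upd q i x) - g x \<le> v i q - g (q $ i)"
    and y: "y \<in> Xs i"
  shows "grad i q \<bullet> (y - q $ i) - G (y - q $ i) \<le> 0"
proof -
  obtain D where D: "(v i has_derivative D) (at q within profile_set Xs)"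
    "\<And>h. D (blk i h) = grad i q \<bullet> h"
    using grad q unfolding is_block_gradient_def by blast
  have uq: "upd q i (q $ i) = q" by (auto simp: upd_def vec_eq_iff)
  have qi: "q $ i \<in> Xs i" using q by (simp add: profile_set_def)
  have img: "upd q i ` Xs i \<subseteq> profile_set Xs"
    using q by (auto simp: profile_set_def upd_def)
  have u: "(upd q i has_derivative blk i) (at (q $ i) within Xs i)"
  proof -
    have "((\<lambda>x. (q - blk i (q $ i)) + blk i x) has_derivative (\<lambda>h. 0 + blk i h)) (at (q $ i) within Xs i)"
      by (rule has_derivative_add[OF has_derivative_const bounded_linear.has_derivative[OF blk_linear has_derivative_ident]])
    thus ?thesis by (simp add: upd_eq[abs_def])
  qed
  have D2: "(v i has_derivative D) (at (upd q i (q $ i)) within (upd q i ` Xs i))"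
    using has_derivative_subset[OF D(1) img] uq by simp
  have c: "((v i \<circ> upd q i) has_derivative (D \<circ> blk i)) (at (q $ i) within Xs i)"
    by (rule diff_chain_within[OF u D2])
  have "((\<lambda>x. (v i \<circ> upd q i) x - g x) has_derivative (\<lambda>h. (D \<circ> blk i) h - G h)) (at (q $ i) within Xs i)"
    by (rule has_derivative_diff[OF c has_derivative_at_withinI[OF gd]])
  from fo_convex[OF this cv qi y] mx uq show ?thesis by (simp add: D(2))
qed

lemma breg_der:
  assumes pd: "\<And>x. psi differentiable (at x)"
  shows "((\<lambda>x. bregman psi x y) has_derivative
          (\<lambda>h. frechet_derivative psi (at x) h - frechet_derivative psi (at y) h)) (at x)"
proof -
  have p: "(psi has_derivative frechet_derivative psi (at x)) (at x)"
    using frechet_derivative_works[THEN iffD1, OF pd] .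
  have L: "bounded_linear (frechet_derivative psi (at y))"
    using has_derivative_bounded_linear[OF frechet_derivative_works[THEN iffD1, OF pd]] .
  have "((\<lambda>x. frechet_derivative psi (at y) (x - y)) has_derivative frechet_derivative psi (at y)) (at x)"
    using bounded_linear.has_derivative[OF L has_derivative_diff[OF has_derivative_ident has_derivative_const]]
    by simp
  from has_derivative_diff[OF has_derivative_diff[OF p has_derivative_const] this]
  show ?thesis unfolding bregman_def by simp
qed

lemma fd_linear:
  assumes pd: "\<And>x. psi differentiable (at x)"
  shows "linear (frechet_derivative psi (at y))"
  using bounded_linear.linear[OF has_derivative_bounded_linear[OF frechet_derivative_works[THEN iffD1, OF pd]]] .

theorem lemma9:
  fixes Xs :: "'n::finite \<Rightarrow> 'a::euclidean_space set"
    and v :: "'n \<Rightarrow> 'a ^ 'n \<Rightarrow> real"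
    and grad :: "'n \<Rightarrow> 'a ^ 'n \<Rightarrow> 'a"
    and psi :: "'a \<Rightarrow> real"
    and mu :: real
  assumes Xs_ne: "\<And>i. Xs i \<noteq> {}"
    and Xs_compact: "\<And>i. compact (Xs i)"
    and Xs_convex: "\<And>i. convex (Xs i)"
    and grad: "is_block_gradient v Xs grad"
    and mono: "monotone_game grad Xs"
    and psi_diff: "\<And>x. psi differentiable (at x)"
    and psi_sc: "strongly_convex psi"
    and mu_pos: "mu > 0"
  shows "(\<forall>sg \<in> profile_set Xs. \<forall>p pstar. perturbed_eq v Xs psi mu sg p \<longrightarrow> nash_eq v Xs pstar \<longrightarrow>
            bregman_prof psi pstar p - bregman_prof psi pstar sg \<le> - bregman_prof psi p sg)
       \<and> (\<forall>(s :: nat \<Rightarrow> 'a ^ 'n) pstar. s 0 \<in> profile_set Xs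
            \<longrightarrow> (\<forall>k. perturbed_eq v Xs psi mu (s k) (s (Suc k)))
            \<longrightarrow> nash_eq v Xs pstar
            \<longrightarrow> (\<forall>k. bregman_prof psi pstar (s (Suc k)) - bregman_prof psi pstar (s k)
                       \<le> - bregman_prof psi (s (Suc k)) (s k)))"
proof -
  let ?P = "\<lambda>a. frechet_derivative psi (at a)"
  have main: "bregman_prof psi pstar p - bregman_prof psi pstar sg \<le> - bregman_prof psi p sg"
    if pe: "perturbed_eq v Xs psi mu sg p" and ne: "nash_eq v Xs pstar" for sg p pstar
  proof -
    have p: "p \<in> profile_set Xs" using pe by (simp add: perturbed_eq_def)
    have ps: "pstar \<in> profile_set Xs" using ne by (simp add: nash_eq_def)
    have pfo: "grad i p \<bullet> (pstar $ i - p $ i)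
        - mu * (?P (p $ i) (pstar $ i - p $ i) - ?P (sg $ i) (pstar $ i - p $ i)) \<le> 0" for i
    proof -
      have gd: "((\<lambda>x. mu * bregman psi x (sg $ i)) has_derivative
          (\<lambda>h. mu * (?P (p $ i) h - ?P (sg $ i) h))) (at (p $ i))"
        by (rule has_derivative_mult_right[OF breg_der[OF psi_diff]])
      show ?thesis
        using block_fo[OF grad p Xs_convex gd, where y="pstar $ i"] pe ps
        by (auto simp: perturbed_eq_def profile_set_def)
    qed
    have nfo: "grad i pstar \<bullet> (p $ i - pstar $ i) \<le> 0" for i
    proof -
      have gd: "((\<lambda>x. 0::real) has_derivative (\<lambda>h. 0)) (at (pstar $ i))" by simp
      show ?thesis
        using block_fo[OF grad ps Xs_convex gd, where y="p $ i"] ne p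
        by (auto simp: nash_eq_def profile_set_def)
    qed
    have m: "(\<Sum>i\<in>UNIV. (grad i p - grad i pstar) \<bullet> (p $ i - pstar $ i)) \<le> 0"
      using mono p ps unfolding monotone_game_def by blast
    have s1: "(\<Sum>i\<in>UNIV. grad i p \<bullet> (p $ i - pstar $ i)) \<le> 0"
    proof -
      have "(\<Sum>i\<in>UNIV. grad i p \<bullet> (p $ i - pstar $ i))
          = (\<Sum>i\<in>UNIV. (grad i p - grad i pstar) \<bullet> (p $ i - pstar $ i))
            + (\<Sum>i\<in>UNIV. grad i pstar \<bullet> (p $ i - pstar $ i))"
        by (simp add: sum.distrib[symmetric] inner_diff_left)
      moreover have "(\<Sum>i\<in>UNIV. grad i pstar \<bullet> (p $ i - pstar $ i)) \<le> 0"
        by (rule sum_nonpos) (use nfo in auto)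
      ultimately show ?thesis using m by linarith
    qed
    have three: "bregman psi (pstar $ i) (p $ i) - bregman psi (pstar $ i) (sg $ i) + bregman psi (p $ i) (sg $ i)
        = - (?P (p $ i) (pstar $ i - p $ i) - ?P (sg $ i) (pstar $ i - p $ i))" for i
    proof -
      have "?P (sg $ i) (pstar $ i - sg $ i) - ?P (sg $ i) (p $ i - sg $ i) = ?P (sg $ i) (pstar $ i - p $ i)"
        using linear_diff[OF fd_linear[OF psi_diff]]
        by (metis diff_diff_eq2 diff_add_cancel add_diff_cancel_right')
      thus ?thesis unfolding bregman_def by simp
    qed
    have each: "bregman psi (pstar $ i) (p $ i) - bregman psi (pstar $ i) (sg $ i) + bregman psi (p $ i) (sg $ i)
        \<le> (grad i p \<bullet> (p $ i - pstar $ i)) / mu" for i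
    proof -
      have "grad i p \<bullet> (p $ i - pstar $ i) = - (grad i p \<bullet> (pstar $ i - p $ i))"
        by (simp add: inner_diff_right)
      with pfo[of i] have "mu * (- (?P (p $ i) (pstar $ i - p $ i) - ?P (sg $ i) (pstar $ i - p $ i)))
          \<le> grad i p \<bullet> (p $ i - pstar $ i)" by (simp add: algebra_simps)
      with mu_pos three[of i] show ?thesis by (simp add: pos_le_divide_eq mult.commute)
    qed
    have "bregman_prof psi pstar p - bregman_prof psi pstar sg + bregman_prof psi p sg
        = (\<Sum>i\<in>UNIV. bregman psi (pstar $ i) (p $ i) - bregman psi (pstar $ i) (sg $ i) + bregman psi (p $ i) (sg $ i))"
      by (simp add: bregman_prof_def sum.distrib sum_subtractf)
    also have "\<dots> \<le> (\<Sum>i\<in>UNIV. (grad i p \<bullet> (p $ i - pstar $ i)) / mu)"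
      by (rule sum_mono) (rule each)
    also have "\<dots> = (\<Sum>i\<in>UNIV. grad i p \<bullet> (p $ i - pstar $ i)) / mu"
      by (simp add: sum_divide_distrib)
    also have "\<dots> \<le> 0" using s1 mu_pos by (simp add: divide_nonpos_pos)
    finally show ?thesis by linarith
  qed
  show ?thesis
  proof (intro conjI ballI allI impI)
    fix sg p pstar assume "sg \<in> profile_set Xs" "perturbed_eq v Xs psi mu sg p" "nash_eq v Xs pstar"
    thus "bregman_prof psi pstar p - bregman_prof psi pstar sg \<le> - bregman_prof psi p sg"
      using main by blast
  next
    fix s :: "nat \<Rightarrow> 'a ^ 'n" and pstar k
    assume "\<forall>k. perturbed_eq v Xs psi mu (s k) (s (Suc k))" "nash_eq v Xs pstar"
    thus "bregman_prof psi pstar (s (Suc k)) - bregman_prof psi pstar (s k) \<le> - bregman_prof psi (s (Suc k)) (s k)"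
      using main by blast
  qed
qed

end
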